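(* Let $p$ be a prime, $G$ a Hausdorff topological group, and suppose $\gamma\in G$ has a topological $p$-Jordan decomposition $\gamma=\gamma_{ts}\gamma_{tu}$. Then: (1) if $\gamma=\gamma'_{ts}\gamma'_{tu}$ is also a topological $p$-Jordan decomposition, then $\gamma_{ts}=\gamma'_{ts}$ and $\gamma_{tu}=\gamma'_{tu}$; (2) the closure of the subgroup generated by $\gamma$ contains $\gamma_{ts}$ and $\gamma_{tu}$; (3) if $G'$ is another Hausdorff topological group and $f:G\to G'$ is a continuous homomorphism, then $f(\gamma)=f(\gamma_{ts})f(\gamma_{tu})$ is a topological $p$-Jordan decomposition; (4) for $g\in G$, $g\gamma g^{-1}=(g\gamma_{ts}g^{-1})(g\gamma_{tu}g^{-1})$ is a topological $p$-Jordan decomposition.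
   Context: An element $\gamma$ of a topological group is absolutely $p$-semisimple if it has finite order coprime to $p$, and topologically $p$-unipotent if $\lim_{n\to\infty}\gamma^{p^n}=1$. A topological $p$-Jordan decomposition of $\gamma$ is a pair of commuting elements $(\gamma_{ts},\gamma_{tu})$ with $\gamma=\gamma_{ts}\gamma_{tu}$, $\gamma_{ts}$ absolutely $p$-semisimple and $\gamma_{tu}$ topologically $p$-unipotent. *)

theory Defs
  imports "HOL-Analysis.Analysis" "HOL-Algebra.Algebra"
begin

definition topological_group :: "('a, 'b) monoid_scheme \<Rightarrow> 'a topology \<Rightarrow> bool" where
  "topological_group G T \<longleftrightarrow> group G \<and> topspace T = carrier G \<and>
     continuous_map (prod_topology T T) T (\<lambda>(x, y). x \<otimes>\<^bsub>G\<^esub> y) \<and>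
     continuous_map T T (\<lambda>x. inv\<^bsub>G\<^esub> x)"

text \<open>Finite order coprime to p (group.ord is 0 for elements of infinite order).\<close>
definition abs_p_semisimple :: "('a, 'b) monoid_scheme \<Rightarrow> nat \<Rightarrow> 'a \<Rightarrow> bool" where
  "abs_p_semisimple G p x \<longleftrightarrow> x \<in> carrier G \<and> group.ord G x > 0 \<and> coprime (group.ord G x) p"

definition top_p_unipotent :: "('a, 'b) monoid_scheme \<Rightarrow> 'a topology \<Rightarrow> nat \<Rightarrow> 'a \<Rightarrow> bool" where
  "top_p_unipotent G T p x \<longleftrightarrow> x \<in> carrier G \<and>
     limitin T (\<lambda>n. x [^]\<^bsub>G\<^esub> (p ^ n)) \<one>\<^bsub>G\<^esub> sequentially"

definition top_p_jordan_decomp ::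
  "('a, 'b) monoid_scheme \<Rightarrow> 'a topology \<Rightarrow> nat \<Rightarrow> 'a \<Rightarrow> 'a \<Rightarrow> 'a \<Rightarrow> bool" where
  "top_p_jordan_decomp G T p g s u \<longleftrightarrow>
     s \<in> carrier G \<and> u \<in> carrier G \<and> s \<otimes>\<^bsub>G\<^esub> u = u \<otimes>\<^bsub>G\<^esub> s \<and>
     g = s \<otimes>\<^bsub>G\<^esub> u \<and> abs_p_semisimple G p s \<and> top_p_unipotent G T p u"

end

theory Submission
  imports Defs "HOL-Number_Theory.Number_Theory"
begin

lemma tg_group: "topological_group G T \<Longrightarrow> group G"
  by (simp add: topological_group_def)

lemma tg_top: "topological_group G T \<Longrightarrow> topspace T = carrier G"
  by (simp add: topological_group_def)

lemma tg_mult_cont: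
  fixes G :: "('a, 'b) monoid_scheme"
  assumes "topological_group G T" "continuous_map Z T f" "continuous_map Z T g"
  shows "continuous_map Z T (\<lambda>x. f x \<otimes>\<^bsub>G\<^esub> g x)"
proof -
  have m: "continuous_map (prod_topology T T) T (\<lambda>(x, y). x \<otimes>\<^bsub>G\<^esub> y)"
    using assms(1) by (simp add: topological_group_def)
  have "continuous_map Z (prod_topology T T) (\<lambda>x. (f x, g x))"
    using assms by (simp add: continuous_map_pairedI)
  from continuous_map_compose[OF this m] show ?thesis by (simp add: o_def)
qed

lemma tg_const_cont:
  fixes G :: "('a, 'b) monoid_scheme"
  assumes "topological_group G T" "a \<in> carrier G"
  shows "continuous_map T T (\<lambda>x. a)"
  using assms by (simp add: tg_top)

lemma tg_pow_cont:
  fixes G :: "('a, 'b) monoid_scheme"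
  assumes "topological_group G T"
  shows "continuous_map T T (\<lambda>x. x [^]\<^bsub>G\<^esub> (n::nat))"
proof (induction n)
  case 0
  have "group G" using assms by (rule tg_group)
  then show ?case using assms by (simp add: tg_top group.is_monoid monoid.one_closed)
next
  case (Suc n)
  have "continuous_map T T (\<lambda>x. x [^]\<^bsub>G\<^esub> n \<otimes>\<^bsub>G\<^esub> x)"
    using tg_mult_cont[OF assms Suc continuous_map_id] by (simp add: id_def)
  then show ?case by simp
qed

lemma (in group) pow_mod_ord:
  assumes "x \<in> carrier G"
  shows "x [^]\<^bsub>G\<^esub> (n::nat) = x [^]\<^bsub>G\<^esub> (n mod group.ord G x)"
proof -
  have "x [^] n = x [^] (ord x * (n div ord x) + n mod ord x)" by simp
  also have "\<dots> = (x [^] ord x) [^] (n div ord x) \<otimes> x [^] (n mod ord x)"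
    using nat_pow_mult[OF assms, of "ord x * (n div ord x)" "n mod ord x"]
      nat_pow_pow[OF assms, of "ord x" "n div ord x"] by simp
  also have "\<dots> = x [^] (n mod ord x)" using assms(1) by simp
  finally show ?thesis .
qed

lemma limit_closure:
  assumes "limitin T f l sequentially" "\<And>n. f n \<in> S"
  shows "l \<in> T closure_of S"
  using assms unfolding in_closure_of limitin_sequentially by (meson order_refl)

lemma (in group) decomp_limits:
  assumes tg: "topological_group G T"
    and d: "top_p_jordan_decomp G T p \<gamma> s u"
    and K: "K > 0" and cong: "\<And>n. [p ^ (K * n) = 1] (mod group.ord G s)"
  shows "limitin T (\<lambda>n. \<gamma> [^]\<^bsub>G\<^esub> (p ^ (K * n))) s sequentially"
    and "limitin T (\<lambda>n. \<gamma> \<otimes>\<^bsub>G\<^esub> (\<gamma> [^]\<^bsub>G\<^esub> (p ^ (K * n))) [^]\<^bsub>G\<^esub> (group.ord G s - 1)) u sequentially"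
proof -
  have sC: "s \<in> carrier G" and uC: "u \<in> carrier G" and comm: "s \<otimes> u = u \<otimes> s"
    and g: "\<gamma> = s \<otimes> u" and ordp: "ord s > 0"
    and ul: "limitin T (\<lambda>n. u [^] (p ^ n)) \<one> sequentially"
    using d by (auto simp: top_p_jordan_decomp_def abs_p_semisimple_def top_p_unipotent_def)
  have spow: "s [^] (p ^ (K * n)) = s" for n
  proof -
    have "s [^] (p ^ (K * n)) = s [^] (p ^ (K * n) mod ord s)" using pow_mod_ord[OF sC] .
    also have "\<dots> = s [^] ((1::nat) mod ord s)" using cong[of n] by (simp add: cong_def)
    also have "\<dots> = s [^] (1::nat)" using pow_mod_ord[OF sC, of 1] by simp
    finally show ?thesis using sC by simp
  qed
  have eq: "\<gamma> [^] (p ^ (K * n)) = s \<otimes> u [^] (p ^ (K * n))" for n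
    using g pow_mult_distrib[OF comm sC uC] spow by simp
  have sm: "strict_mono (\<lambda>n::nat. K * n)" using K by (simp add: strict_mono_def)
  have ul2: "limitin T (\<lambda>n. u [^] (p ^ (K * n))) \<one> sequentially"
    using limitin_subsequence[OF sm ul] by (simp add: o_def)
  have c1: "continuous_map T T (\<lambda>x. s \<otimes> x)"
    using tg_mult_cont[OF tg tg_const_cont[OF tg sC] continuous_map_id] by (simp add: id_def)
  have "limitin T ((\<lambda>x. s \<otimes> x) \<circ> (\<lambda>n. u [^] (p ^ (K * n)))) (s \<otimes> \<one>) sequentially"
    by (rule continuous_map_limit[OF c1 ul2])
  then show L: "limitin T (\<lambda>n. \<gamma> [^] (p ^ (K * n))) s sequentially"
    using sC by (simp add: o_def eq)
  have gC: "\<gamma> \<in> carrier G" using g sC uC by simp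
  have c2: "continuous_map T T (\<lambda>x. \<gamma> \<otimes> x [^] (ord s - 1))"
    using tg_mult_cont[OF tg tg_const_cont[OF tg gC] tg_pow_cont[OF tg]] .
  have "limitin T ((\<lambda>x. \<gamma> \<otimes> x [^] (ord s - 1)) \<circ> (\<lambda>n. \<gamma> [^] (p ^ (K * n)))) (\<gamma> \<otimes> s [^] (ord s - 1)) sequentially"
    by (rule continuous_map_limit[OF c2 L])
  moreover have "\<gamma> \<otimes> s [^] (ord s - 1) = u"
  proof -
    have "\<gamma> \<otimes> s [^] (ord s - 1) = u \<otimes> (s \<otimes> s [^] (ord s - 1))"
      using g comm sC uC by (simp add: m_assoc)
    also have "s \<otimes> s [^] (ord s - 1) = s [^] ord s"
      using ordp sC by (metis Suc_diff_1 nat_pow_Suc2)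
    finally show ?thesis using sC uC by simp
  qed
  ultimately show "limitin T (\<lambda>n. \<gamma> \<otimes> (\<gamma> [^] (p ^ (K * n))) [^] (ord s - 1)) u sequentially"
    by (simp add: o_def)
qed

lemma decomp_cong:
  fixes G :: "('a, 'b) monoid_scheme"
  assumes "top_p_jordan_decomp G T p \<gamma> s u" "group G"
  shows "[p ^ (totient (group.ord G s) * k) = 1] (mod group.ord G s)"
proof -
  have "coprime p (group.ord G s)" using assms
    by (simp add: top_p_jordan_decomp_def abs_p_semisimple_def coprime_commute)
  then have "[p ^ totient (group.ord G s) = 1] (mod group.ord G s)" by (rule euler_theorem)
  then have "[(p ^ totient (group.ord G s)) ^ k = 1 ^ k] (mod group.ord G s)" by (rule cong_pow)
  then show ?thesis by (simp add: power_mult)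
qed

lemma decomp_hom:
  fixes G :: "('a, 'b) monoid_scheme" and G' :: "('c, 'd) monoid_scheme"
  assumes tg: "topological_group G T" and tg': "topological_group G' T'"
    and d: "top_p_jordan_decomp G T p \<gamma> s u"
    and f: "f \<in> hom G G'" and fc: "continuous_map T T' f"
  shows "f \<gamma> = f s \<otimes>\<^bsub>G'\<^esub> f u \<and> top_p_jordan_decomp G' T' p (f \<gamma>) (f s) (f u)"
proof -
  have G: "group G" and G': "group G'" using tg tg' by (auto intro: tg_group)
  have sC: "s \<in> carrier G" and uC: "u \<in> carrier G" and comm: "s \<otimes>\<^bsub>G\<^esub> u = u \<otimes>\<^bsub>G\<^esub> s"
    and g: "\<gamma> = s \<otimes>\<^bsub>G\<^esub> u" and ordp: "group.ord G s > 0" and cop: "coprime (group.ord G s) p"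
    and ul: "limitin T (\<lambda>n. u [^]\<^bsub>G\<^esub> (p ^ n)) \<one>\<^bsub>G\<^esub> sequentially"
    using d by (auto simp: top_p_jordan_decomp_def abs_p_semisimple_def top_p_unipotent_def)
  have fsC: "f s \<in> carrier G'" and fuC: "f u \<in> carrier G'" using f sC uC by (auto simp: hom_def)
  have e1: "f \<gamma> = f s \<otimes>\<^bsub>G'\<^esub> f u" using g f sC uC by (simp add: hom_mult)
  have e2: "f s \<otimes>\<^bsub>G'\<^esub> f u = f u \<otimes>\<^bsub>G'\<^esub> f s"
    using comm f sC uC by (metis hom_mult)
  have "f s [^]\<^bsub>G'\<^esub> group.ord G s = \<one>\<^bsub>G'\<^esub>"
    using hom_nat_pow[OF f sC G G', of "group.ord G s"] group.pow_ord_eq_1[OF G sC] hom_one[OF f G G'] by simp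
  then have dv: "group.ord G' (f s) dvd group.ord G s" using group.pow_eq_id[OF G' fsC] by simp
  then have o1: "group.ord G' (f s) > 0" using ordp by (metis dvd_0_left_iff gr0I not_gr0)
  have o2: "coprime (group.ord G' (f s)) p" using dv cop by (meson coprime_divisors dvd_refl)
  have "limitin T' (f \<circ> (\<lambda>n. u [^]\<^bsub>G\<^esub> (p ^ n))) (f \<one>\<^bsub>G\<^esub>) sequentially"
    by (rule continuous_map_limit[OF fc ul])
  then have ul': "limitin T' (\<lambda>n. f u [^]\<^bsub>G'\<^esub> (p ^ n)) \<one>\<^bsub>G'\<^esub> sequentially"
    using hom_nat_pow[OF f uC G G'] hom_one[OF f G G'] by (simp add: o_def)
  show ?thesis using e1 e2 fsC fuC o1 o2 ul'
    by (simp add: top_p_jordan_decomp_def abs_p_semisimple_def top_p_unipotent_def)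
qed

lemma sub_pow_closed:
  fixes G :: "('a, 'b) monoid_scheme"
  assumes "subgroup H G" "x \<in> H"
  shows "x [^]\<^bsub>G\<^esub> (k::nat) \<in> H"
proof (induction k)
  case 0 then show ?case using assms by (simp add: subgroup.one_closed)
next
  case (Suc k) then show ?case using assms by (simp add: subgroup.m_closed)
qed

lemma (in group) conj_mult:
  assumes "x \<in> carrier G" "y \<in> carrier G" "g \<in> carrier G"
  shows "g \<otimes> (x \<otimes> y) \<otimes> inv g = (g \<otimes> x \<otimes> inv g) \<otimes> (g \<otimes> y \<otimes> inv g)"
proof -
  have c: "inv g \<otimes> (g \<otimes> w) = w" if "w \<in> carrier G" for w
    using assms that by (simp add: m_assoc[symmetric])
  show ?thesis using assms by (simp add: m_assoc c)
qed

lemma conj_hom: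
  fixes G :: "('a, 'b) monoid_scheme"
  assumes G: "group G" and gC: "g \<in> carrier G"
  shows "(\<lambda>x. g \<otimes>\<^bsub>G\<^esub> x \<otimes>\<^bsub>G\<^esub> inv\<^bsub>G\<^esub> g) \<in> hom G G"
proof (rule homI)
  fix x assume "x \<in> carrier G" then show "g \<otimes>\<^bsub>G\<^esub> x \<otimes>\<^bsub>G\<^esub> inv\<^bsub>G\<^esub> g \<in> carrier G"
    using G gC by (simp add: group.inv_closed group.is_monoid monoid.m_closed)
next
  fix x y assume x: "x \<in> carrier G" and y: "y \<in> carrier G"
  show "g \<otimes>\<^bsub>G\<^esub> (x \<otimes>\<^bsub>G\<^esub> y) \<otimes>\<^bsub>G\<^esub> inv\<^bsub>G\<^esub> g =
        (g \<otimes>\<^bsub>G\<^esub> x \<otimes>\<^bsub>G\<^esub> inv\<^bsub>G\<^esub> g) \<otimes>\<^bsub>G\<^esub> (g \<otimes>\<^bsub>G\<^esub> y \<otimes>\<^bsub>G\<^esub> inv\<^bsub>G\<^esub> g)"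
    using G x y gC by (simp add: group.conj_mult)
qed

lemma conj_cont:
  fixes G :: "('a, 'b) monoid_scheme"
  assumes tg: "topological_group G T" and gC: "g \<in> carrier G"
  shows "continuous_map T T (\<lambda>x. g \<otimes>\<^bsub>G\<^esub> x \<otimes>\<^bsub>G\<^esub> inv\<^bsub>G\<^esub> g)"
proof -
  have G: "group G" using tg by (rule tg_group)
  have "continuous_map T T (\<lambda>x. g \<otimes>\<^bsub>G\<^esub> x)"
    using tg_mult_cont[OF tg tg_const_cont[OF tg gC] continuous_map_id] by (simp add: id_def)
  from tg_mult_cont[OF tg this tg_const_cont[OF tg group.inv_closed[OF G gC]]] show ?thesis .
qed

theorem proposition1p7:
  fixes G :: "('a, 'b) monoid_scheme" and T :: "'a topology"
    and G' :: "('c, 'd) monoid_scheme" and T' :: "'c topology"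
    and p :: nat and \<gamma> s u :: 'a
  assumes "Factorial_Ring.prime p"
    and "topological_group G T" and "Hausdorff_space T"
    and "top_p_jordan_decomp G T p \<gamma> s u"
  shows "(\<forall>s' u'. top_p_jordan_decomp G T p \<gamma> s' u' \<longrightarrow> s = s' \<and> u = u')
    \<and> (s \<in> T closure_of (generate G {\<gamma>}) \<and> u \<in> T closure_of (generate G {\<gamma>}))
    \<and> (topological_group G' T' \<and> Hausdorff_space T' \<longrightarrow>
         (\<forall>f. f \<in> hom G G' \<and> continuous_map T T' f \<longrightarrow>
              f \<gamma> = f s \<otimes>\<^bsub>G'\<^esub> f u \<and> top_p_jordan_decomp G' T' p (f \<gamma>) (f s) (f u)))
    \<and> (\<forall>g \<in> carrier G.
         top_p_jordan_decomp G T p (g \<otimes>\<^bsub>G\<^esub> \<gamma> \<otimes>\<^bsub>G\<^esub> inv\<^bsub>G\<^esub> g)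
           (g \<otimes>\<^bsub>G\<^esub> s \<otimes>\<^bsub>G\<^esub> inv\<^bsub>G\<^esub> g) (g \<otimes>\<^bsub>G\<^esub> u \<otimes>\<^bsub>G\<^esub> inv\<^bsub>G\<^esub> g))"
proof (intro conjI allI impI ballI)
  have tg: "topological_group G T" and d: "top_p_jordan_decomp G T p \<gamma> s u" using assms by auto
  have G: "group G" using tg by (rule tg_group)
  have sC: "s \<in> carrier G" and uC: "u \<in> carrier G" and g: "\<gamma> = s \<otimes>\<^bsub>G\<^esub> u"
    using d by (auto simp: top_p_jordan_decomp_def)
  have gC: "\<gamma> \<in> carrier G" using g sC uC G by (simp add: group.is_monoid monoid.m_closed)
  have ordp: "group.ord G s > 0" using d by (simp add: top_p_jordan_decomp_def abs_p_semisimple_def)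
  let ?H = "generate G {\<gamma>}"
  have sub: "subgroup ?H G" using G gC by (simp add: group.generate_is_subgroup)
  have gH: "\<gamma> \<in> ?H" by (simp add: generate.incl)
  have powH: "\<gamma> [^]\<^bsub>G\<^esub> (k::nat) \<in> ?H" for k
    using G sub gH by (simp add: sub_pow_closed)
  have tot: "totient (group.ord G s) > 0" using ordp by simp
  note L = group.decomp_limits[OF G tg d tot decomp_cong[OF d G]]
  show "s \<in> T closure_of ?H" by (rule limit_closure[OF L(1) powH])
  show "u \<in> T closure_of ?H"
  proof (rule limit_closure[OF L(2)])
    fix n show "\<gamma> \<otimes>\<^bsub>G\<^esub> (\<gamma> [^]\<^bsub>G\<^esub> (p ^ (totient (group.ord G s) * n))) [^]\<^bsub>G\<^esub> (group.ord G s - 1) \<in> ?H"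
      using sub gH powH G by (metis subgroup.m_closed sub_pow_closed)
  qed
  fix s' u' assume d': "top_p_jordan_decomp G T p \<gamma> s' u'"
  have ordp': "group.ord G s' > 0" using d' by (simp add: top_p_jordan_decomp_def abs_p_semisimple_def)
  define K where "K = totient (group.ord G s) * totient (group.ord G s')"
  have K: "K > 0" using ordp ordp' by (simp add: K_def)
  have c1: "[p ^ (K * n) = 1] (mod group.ord G s)" for n
    using decomp_cong[OF d G, of "totient (group.ord G s') * n"] by (simp add: K_def mult.assoc)
  have c2: "[p ^ (K * n) = 1] (mod group.ord G s')" for n
    using decomp_cong[OF d' G, of "totient (group.ord G s) * n"] by (simp add: K_def mult.assoc mult.left_commute)
  have "s = s'"
    using limitin_Hausdorff_unique[OF group.decomp_limits(1)[OF G tg d K c1]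
        group.decomp_limits(1)[OF G tg d' K c2] trivial_limit_sequentially assms(3)] .
  then show "s = s'" .
  have sC': "s' \<in> carrier G" and uC': "u' \<in> carrier G" and g': "\<gamma> = s' \<otimes>\<^bsub>G\<^esub> u'"
    using d' by (auto simp: top_p_jordan_decomp_def)
  show "u = u'" using g g' \<open>s = s'\<close> sC uC uC' G by (metis group.is_monoid group.Units_eq monoid.Units_l_cancel)
next
  fix f assume "topological_group G' T' \<and> Hausdorff_space T'" "f \<in> hom G G' \<and> continuous_map T T' f"
  then show "f \<gamma> = f s \<otimes>\<^bsub>G'\<^esub> f u" "top_p_jordan_decomp G' T' p (f \<gamma>) (f s) (f u)"
    using decomp_hom[OF assms(2) _ assms(4)] by blast+
next
  fix g assume gC: "g \<in> carrier G"
  have G: "group G" using assms(2) by (rule tg_group)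
  show "top_p_jordan_decomp G T p (g \<otimes>\<^bsub>G\<^esub> \<gamma> \<otimes>\<^bsub>G\<^esub> inv\<^bsub>G\<^esub> g)
           (g \<otimes>\<^bsub>G\<^esub> s \<otimes>\<^bsub>G\<^esub> inv\<^bsub>G\<^esub> g) (g \<otimes>\<^bsub>G\<^esub> u \<otimes>\<^bsub>G\<^esub> inv\<^bsub>G\<^esub> g)"
    using decomp_hom[OF assms(2) assms(2) assms(4) conj_hom[OF G gC] conj_cont[OF assms(2) gC]] by blast
qed

end
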